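(* Let $N\ge 1$, $k\ge 1$ and $1\le m\le k$ be integers. For each $n\in\{m,\ldots,k\}$ let $\mathcal{Q}^{(n)}=\left(q^{(n)}_1,\ldots,q^{(n)}_{N^n}\right)$ be a tuple of vectors $q^{(n)}_l\in\Delta^N$. Define $N\times N$ matrices recursively by $\overline{Q}^{(k+1)}_i:=E_N$ for $1\le i\le N^k$, and, for $n=k,k-1,\ldots,m$ and $1\le i\le N^{n-1}$, $$\overline{Q}^{(n)}_i:=\left(\overline{Q}^{(n+1)}_{N(i-1)+1}\,q^{(n)}_{N(i-1)+1},\ \overline{Q}^{(n+1)}_{N(i-1)+2}\,q^{(n)}_{N(i-1)+2},\ \ldots,\ \overline{Q}^{(n+1)}_{N(i-1)+N}\,q^{(n)}_{N(i-1)+N}\right).$$ Then $$\mathcal{S}\left(\mathcal{Q}^{(m)},\ldots,\mathcal{Q}^{(k)}\right)=C^{(m)}_1\sum_{i=1}^{N^{m-1}}E_{N^{m-1},i}\otimes\overline{Q}^{(m)}_i.$$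
   Context: $\Delta^{n}$ denotes the set of probability vectors in $\mathbb{R}^n$ (column vectors with nonnegative entries summing to $1$). $E_n$ is the $n\times n$ identity matrix, $e_{n,i}$ the $i$-th standard basis column vector of $\mathbb{R}^n$, $E_{n,i}:=e_{n,i}e_{n,i}^{T}$, $\mathbf{1}_n\in\mathbb{R}^n$ the all-ones vector, and $\otimes$ the Kronecker product. The commutation matrix is $C_{n,m}:=\sum_{i=1}^{m}e_{m,i}^{T}\otimes E_n\otimes e_{m,i}$. For integers $k\ge 0$ and $0\le m\le k$ (with $N$ fixed): $M^{(k)}_m:=E_{N^m}\otimes\mathbf{1}_N^{T}\otimes E_{N^{k-m}}\in\mathbb{R}^{N^k\times N^{k+1}}$; for a tuple $\mathcal{Q}=(q_1,\ldots,q_{N^k})$ of vectors in $\Delta^N$, $B^{(k)}_m(\mathcal{Q}):=\sum_{i=1}^{N^m}\sum_{j=1}^{N^{k-m}}E_{N^m,i}\otimes q_{N^{k-m}(i-1)+j}\otimes E_{N^{k-m},j}\in\mathbb{R}^{N^{k+1}\times N^k}$; $C^{(k)}_m:=C_{N^m,N^{k-m}}$. The shift matrix of tuples $\mathcal{Q}^{(m)},\ldots,\mathcal{Q}^{(k)}$ (where $\mathcal{Q}^{(n)}$ has $N^n$ entries) is the $N^m\times N^m$ matrix $$\mathcal{S}\left(\mathcal{Q}^{(m)},\ldots,\mathcal{Q}^{(k)}\right):=M^{(m)}_m M^{(m+1)}_{m+1}\cdots M^{(k)}_k\,C^{(k+1)}_1\,B^{(k)}_k\left(\mathcal{Q}^{(k)}\right)B^{(k-1)}_{k-1}\left(\mathcal{Q}^{(k-1)}\right)\cdots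 B^{(m)}_m\left(\mathcal{Q}^{(m)}\right).$$ *)

theory Defs
  imports "Jordan_Normal_Form.Matrix"
begin

text \<open>All matrices and (column/row) vectors are JNF matrices of type real mat.
  Column vectors in R^n are n x 1 matrices. Paper indices (starting at 1) are kept 1-based.\<close>

definition kron :: "real mat \<Rightarrow> real mat \<Rightarrow> real mat" (infixl "\<otimes>\<^sub>K" 70) where
  "A \<otimes>\<^sub>K B = mat (dim_row A * dim_row B) (dim_col A * dim_col B)
     (\<lambda>(i,j). A $$ (i div dim_row B, j div dim_col B) * B $$ (i mod dim_row B, j mod dim_col B))"

definition msum :: "nat \<Rightarrow> nat \<Rightarrow> ('i \<Rightarrow> real mat) \<Rightarrow> 'i set \<Rightarrow> real mat" where
  "msum r c f S = mat r c (\<lambda>(a,b). \<Sum>x\<in>S. f x $$ (a,b))"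

definition ecol :: "nat \<Rightarrow> nat \<Rightarrow> real mat" where
  "ecol n i = mat n 1 (\<lambda>(a,b). if a = i - 1 then 1 else 0)"

definition Eii :: "nat \<Rightarrow> nat \<Rightarrow> real mat" where
  "Eii n i = ecol n i * transpose_mat (ecol n i)"

definition ones :: "nat \<Rightarrow> real mat" where
  "ones n = mat n 1 (\<lambda>_. 1)"

definition prob_vec :: "nat \<Rightarrow> real mat \<Rightarrow> bool" where
  "prob_vec n q \<longleftrightarrow> q \<in> carrier_mat n 1 \<and> (\<forall>a<n. q $$ (a,0) \<ge> 0) \<and> (\<Sum>a<n. q $$ (a,0)) = 1"

definition commat :: "nat \<Rightarrow> nat \<Rightarrow> real mat" where
  "commat n m = msum (n*m) (m*n)
     (\<lambda>i. transpose_mat (ecol m i) \<otimes>\<^sub>K 1\<^sub>m n \<otimes>\<^sub>K ecol m i) {1..m}"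

definition Mmat :: "nat \<Rightarrow> nat \<Rightarrow> nat \<Rightarrow> real mat" where
  "Mmat N k m = 1\<^sub>m (N^m) \<otimes>\<^sub>K transpose_mat (ones N) \<otimes>\<^sub>K 1\<^sub>m (N^(k-m))"

text \<open>B^{(k)}_m(Q), where Q l is the l-th (1-based) entry of the tuple\<close>
definition Bmat :: "nat \<Rightarrow> nat \<Rightarrow> nat \<Rightarrow> (nat \<Rightarrow> real mat) \<Rightarrow> real mat" where
  "Bmat N k m Q = msum (N^(k+1)) (N^k)
     (\<lambda>(i,j). Eii (N^m) i \<otimes>\<^sub>K Q (N^(k-m) * (i-1) + j) \<otimes>\<^sub>K Eii (N^(k-m)) j)
     ({1..N^m} \<times> {1..N^(k-m)})"

definition Cmat :: "nat \<Rightarrow> nat \<Rightarrow> nat \<Rightarrow> real mat" where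
  "Cmat N k m = commat (N^m) (N^(k-m))"

text \<open>Shift matrix S(Q^(m),...,Q^(k)); QQ n l is q^{(n)}_l.
  M^(m)_m ... M^(k)_k C^(k+1)_1 B^(k)_k(Q^(k)) ... B^(m)_m(Q^(m)).\<close>
definition shift_mat :: "nat \<Rightarrow> nat \<Rightarrow> nat \<Rightarrow> (nat \<Rightarrow> nat \<Rightarrow> real mat) \<Rightarrow> real mat" where
  "shift_mat N m k QQ =
     foldr (\<lambda>A acc. A * acc) (map (\<lambda>n. Mmat N n n) [m..<k+1]) (1\<^sub>m (N^(k+1)))
     * Cmat N (k+1) 1
     * foldr (\<lambda>A acc. A * acc) (map (\<lambda>n. Bmat N n n (QQ n)) (rev [m..<k+1])) (1\<^sub>m (N^m))"

text \<open>Qbar_aux N k QQ d i = \<overline>Q^{(k+1-d)}_i  (recursion from level k+1 downwards).\<close>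
fun Qbar_aux :: "nat \<Rightarrow> nat \<Rightarrow> (nat \<Rightarrow> nat \<Rightarrow> real mat) \<Rightarrow> nat \<Rightarrow> nat \<Rightarrow> real mat" where
  "Qbar_aux N k QQ 0 i = 1\<^sub>m N"
| "Qbar_aux N k QQ (Suc d) i =
     mat N N (\<lambda>(a,b). (Qbar_aux N k QQ d (N*(i-1)+b+1) * QQ (k-d) (N*(i-1)+b+1)) $$ (a,0))"

definition Qbar :: "nat \<Rightarrow> nat \<Rightarrow> (nat \<Rightarrow> nat \<Rightarrow> real mat) \<Rightarrow> nat \<Rightarrow> nat \<Rightarrow> real mat" where
  "Qbar N k QQ n i = Qbar_aux N k QQ (k + 1 - n) i"

end

theory Submission
  imports Defs
begin
lemma mat_mult_mat: "mat a b f * mat b c g = mat a c (\<lambda>(i,j). \<Sum>t<b. f (i,t) * g (t,j))"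
  by (rule eq_matI) (auto simp: scalar_prod_def atLeast0LessThan)

lemma Eii_mat: "Eii n i = mat n n (\<lambda>(a,b). if a = i - 1 \<and> b = i - 1 then 1 else 0)"
  by (rule eq_matI) (auto simp: Eii_def ecol_def scalar_prod_def)

lemma div_lt_aux: "(j::nat) < N * M \<Longrightarrow> j div N < M"
  by (metis less_mult_imp_div_less mult.commute)

lemma Mmat_eq: "N \<ge> 1 \<Longrightarrow> Mmat N n n = mat (N^n) (N^Suc n) (\<lambda>(r,c). if r = c div N then 1 else 0)"
  apply (rule eq_matI)
  by (auto simp: Mmat_def kron_def ones_def mult.commute div_lt_aux)
lemma sum_times_single: "sum g (A \<times> {b}) = (\<Sum>i\<in>A. g (i,b))"
proof -
  have "A \<times> {b} = (\<lambda>i. (i,b)) ` A" by auto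
  moreover have "inj_on (\<lambda>i. (i,b)) A" by (auto simp: inj_on_def)
  ultimately show ?thesis by (simp add: sum.reindex)
qed

lemma kron_index: "i < dim_row A * dim_row B \<Longrightarrow> j < dim_col A * dim_col B \<Longrightarrow>
  (A \<otimes>\<^sub>K B) $$ (i,j) = A $$ (i div dim_row B, j div dim_col B) * B $$ (i mod dim_row B, j mod dim_col B)"
  by (simp add: kron_def)

lemma kron_dims[simp]: "dim_row (A \<otimes>\<^sub>K B) = dim_row A * dim_row B" "dim_col (A \<otimes>\<^sub>K B) = dim_col A * dim_col B"
  by (simp_all add: kron_def)

lemma Bmat_eq:
  assumes N: "N \<ge> 1" and Q: "\<And>j. 1 \<le> j \<Longrightarrow> j \<le> N^n \<Longrightarrow> Q j \<in> carrier_mat N 1"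
  shows "Bmat N n n Q = mat (N^Suc n) (N^n) (\<lambda>(r,c). if r div N = c then Q (c+1) $$ (r mod N, 0) else 0)"
proof (rule eq_matI)
  fix r c assume r: "r < dim_row (mat (N^Suc n) (N^n) (\<lambda>(r,c). if r div N = c then Q (c+1) $$ (r mod N, 0) else 0))"
    and c: "c < dim_col (mat (N^Suc n) (N^n) (\<lambda>(r,c). if r div N = c then Q (c+1) $$ (r mod N, 0) else 0))"
  hence r: "r < N^Suc n" and c: "c < N^n" by auto
  have ent: "(Eii (N^n) i \<otimes>\<^sub>K Q i \<otimes>\<^sub>K Eii 1 1) $$ (r,c) = (if r div N = i - 1 \<and> c = i - 1 then Q i $$ (r mod N, 0) else 0)"
    if i: "i \<in> {1..N^n}" for i
  proof -
    from Q[of i] i have Qc: "dim_row (Q i) = N" "dim_col (Q i) = 1" by auto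
    have "r div N < N^n" using r by (simp add: div_lt_aux)
    thus ?thesis using r c Qc
      by (auto simp: kron_index Eii_mat mult.commute)
  qed
  have "Bmat N n n Q $$ (r,c) = (\<Sum>i\<in>{1..N^n}. (Eii (N^n) i \<otimes>\<^sub>K Q i \<otimes>\<^sub>K Eii 1 1) $$ (r,c))"
    using r c by (simp add: Bmat_def msum_def sum_times_single)
  also have "\<dots> = (\<Sum>i\<in>{1..N^n}. if i = c + 1 then (if r div N = c then Q (c+1) $$ (r mod N, 0) else 0) else 0)"
  proof (rule sum.cong)
    fix i assume i: "i \<in> {1..N^n}"
    show "(Eii (N^n) i \<otimes>\<^sub>K Q i \<otimes>\<^sub>K Eii 1 1) $$ (r,c) = (if i = c + 1 then (if r div N = c then Q (c+1) $$ (r mod N, 0) else 0) else 0)"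
      unfolding ent[OF i] using i by auto
  qed simp
  also have "\<dots> = (if r div N = c then Q (c+1) $$ (r mod N, 0) else 0)"
    using c by (simp add: sum.delta)
  finally show "Bmat N n n Q $$ (r,c) = mat (N^Suc n) (N^n) (\<lambda>(r,c). if r div N = c then Q (c+1) $$ (r mod N, 0) else 0) $$ (r,c)"
    using r c by simp
qed (auto simp: Bmat_def msum_def)
lemma commat_eq:
  assumes n: "n \<ge> 1" and m: "m \<ge> 1"
  shows "commat n m = mat (n*m) (m*n) (\<lambda>(r,c). if r div m = c mod n \<and> c div n = r mod m then 1 else 0)"
proof (rule eq_matI)
  fix r c assume "r < dim_row (mat (n*m) (m*n) (\<lambda>(r,c). if r div m = c mod n \<and> c div n = r mod m then 1 else 0))"
    "c < dim_col (mat (n*m) (m*n) (\<lambda>(r,c). if r div m = c mod n \<and> c div n = r mod m then 1 else 0))"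
  hence r: "r < n*m" and c: "c < m*n" by auto
  have rd: "r div m < n" using r by (simp add: less_mult_imp_div_less)
  have ent: "(transpose_mat (ecol m i) \<otimes>\<^sub>K 1\<^sub>m n \<otimes>\<^sub>K ecol m i) $$ (r,c) =
      (if i = r mod m + 1 then (if r div m = c mod n \<and> c div n = r mod m then 1 else 0) else 0)"
    if i: "i \<in> {1..m}" for i
  proof -
    have "c div n < m" using c by (simp add: less_mult_imp_div_less)
    thus ?thesis using r c rd i n m
      by (auto simp: kron_index ecol_def mult.commute)
  qed
  have "commat n m $$ (r,c) = (\<Sum>i\<in>{1..m}. (transpose_mat (ecol m i) \<otimes>\<^sub>K 1\<^sub>m n \<otimes>\<^sub>K ecol m i) $$ (r,c))"
    using r c by (simp add: commat_def msum_def)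
  also have "\<dots> = (\<Sum>i\<in>{1..m}. (if i = r mod m + 1 then (if r div m = c mod n \<and> c div n = r mod m then 1 else 0) else 0))"
    by (rule sum.cong) (simp_all add: ent)
  also have "\<dots> = (if r div m = c mod n \<and> c div n = r mod m then 1 else 0)"
    using m by (simp add: sum.delta Suc_leI)
  finally show "commat n m $$ (r,c) = mat (n*m) (m*n) (\<lambda>(r,c). if r div m = c mod n \<and> c div n = r mod m then 1 else 0) $$ (r,c)"
    using r c by simp
qed (auto simp: commat_def msum_def)
lemma mat_eq_on: "(\<And>i j. i < a \<Longrightarrow> j < c \<Longrightarrow> f (i,j) = g (i,j)) \<Longrightarrow> mat a c f = mat a c g"
  by (rule eq_matI) auto

lemma div_pow_Suc: "(x::nat) div N div N^d = x div N^(Suc d)"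
  by (simp add: div_mult2_eq)

lemma Mprod:
  assumes N: "N \<ge> 1"
  shows "m \<le> K \<Longrightarrow> foldr (\<lambda>A acc. A * acc) (map (\<lambda>n. Mmat N n n) [m..<K]) (1\<^sub>m (N^K))
    = mat (N^m) (N^K) (\<lambda>(r,c). if r = c div N^(K-m) then 1 else 0)"
proof (induction "K - m" arbitrary: m)
  case 0
  hence "m = K" by simp
  thus ?case by (intro eq_matI) auto
next
  case (Suc d)
  hence mK: "m < K" and d: "d = K - Suc m" by auto
  have "[m..<K] = m # [Suc m..<K]" using mK by (simp add: upt_conv_Cons)
  hence "foldr (\<lambda>A acc. A * acc) (map (\<lambda>n. Mmat N n n) [m..<K]) (1\<^sub>m (N^K))
      = Mmat N m m * mat (N^Suc m) (N^K) (\<lambda>(r,c). if r = c div N^(K-Suc m) then 1 else 0)"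
    using Suc.hyps(1)[of "Suc m"] d mK by simp
  also have "\<dots> = mat (N^m) (N^K) (\<lambda>(r,c). if r = c div N^(K-m) then 1 else 0)"
    unfolding Mmat_eq[OF N] mat_mult_mat
  proof (rule mat_eq_on)
    fix r c assume r: "r < N^m" and c: "c < N^K"
    define e where "e = c div N^(K - Suc m)"
    have "N^K = N^Suc m * N^(K - Suc m)" using mK by (metis Suc_leI le_add_diff_inverse power_add)
    hence e: "e < N^Suc m" using c N unfolding e_def by (simp add: div_lt_aux mult.commute)
    have ee: "e div N = c div N^(K-m)" unfolding e_def
      by (metis Suc_diff_Suc div_pow_Suc mK div_mult2_eq power_Suc2 mult.commute)
    have "(\<Sum>t<N^Suc m. (if r = t div N then 1 else 0) * (if t = c div N^(K - Suc m) then 1 else 0))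
        = (\<Sum>t<N^Suc m. if t = e then (if r = e div N then 1 else 0) else (0::real))"
      by (rule sum.cong) (auto simp: e_def)
    also have "\<dots> = (if r = c div N^(K-m) then 1 else 0)" using e ee by (simp add: sum.delta)
    finally show "(case (r, c) of (i, j) \<Rightarrow> \<Sum>t<N ^ Suc m. (case (i, t) of (r, c) \<Rightarrow> if r = c div N then 1 else 0) *
          (case (t, j) of (r, c) \<Rightarrow> if r = c div N ^ (K - Suc m) then 1 else 0)) =
         (case (r, c) of (r, c) \<Rightarrow> if r = c div N ^ (K - m) then 1 else (0::real))" by (simp only: prod.case)
  qed
  finally show ?case .
qed
lemma Bprod:
  assumes N: "N \<ge> 1" and mK: "m \<le> K"
    and Q: "\<And>l j. m \<le> l \<Longrightarrow> l < K \<Longrightarrow> 1 \<le> j \<Longrightarrow> j \<le> N^l \<Longrightarrow> QQ l j \<in> carrier_mat N 1"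
  shows "foldr (\<lambda>A acc. A * acc) (map (\<lambda>n. Bmat N n n (QQ n)) (rev [m..<K])) (1\<^sub>m (N^m))
    = mat (N^K) (N^m) (\<lambda>(c,y). if c div N^(K-m) = y then
        (\<Prod>l\<in>{m..<K}. QQ l (c div N^(K-l) + 1) $$ ((c div N^(K-1-l)) mod N, 0)) else 0)"
  using mK Q
proof (induction K rule: dec_induct)
  case base
  show ?case by (intro eq_matI) auto
next
  case (step K)
  note IH = step.IH[OF step.prems]
  have QK: "\<And>j. 1 \<le> j \<Longrightarrow> j \<le> N^K \<Longrightarrow> QQ K j \<in> carrier_mat N 1"
    using step.prems step.hyps by auto
  have "foldr (\<lambda>A acc. A * acc) (map (\<lambda>n. Bmat N n n (QQ n)) (rev [m..<Suc K])) (1\<^sub>m (N^m))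
     = Bmat N K K (QQ K) * mat (N^K) (N^m) (\<lambda>(c,y). if c div N^(K-m) = y then
        (\<Prod>l\<in>{m..<K}. QQ l (c div N^(K-l) + 1) $$ ((c div N^(K-1-l)) mod N, 0)) else 0)"
    using step.hyps IH by simp
  also have "\<dots> = mat (N^Suc K) (N^m) (\<lambda>(c,y). if c div N^(Suc K-m) = y then
        (\<Prod>l\<in>{m..<Suc K}. QQ l (c div N^(Suc K-l) + 1) $$ ((c div N^(Suc K-1-l)) mod N, 0)) else 0)"
    apply (subst Bmat_eq[OF N QK], assumption+)
    unfolding mat_mult_mat
  proof (rule mat_eq_on)
    fix c y assume c: "c < N^Suc K" and y: "y < N^m"
    define e where "e = c div N"
    have e: "e < N^K" using c unfolding e_def by (simp add: div_lt_aux)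
    have d1: "e div N^(K-m) = c div N^(Suc K - m)"
      unfolding e_def using step.hyps by (simp add: div_pow_Suc Suc_diff_le)
    have pr: "(\<Prod>l\<in>{m..<K}. QQ l (e div N^(K-l) + 1) $$ ((e div N^(K-1-l)) mod N, 0))
        = (\<Prod>l\<in>{m..<K}. QQ l (c div N^(Suc K-l) + 1) $$ ((c div N^(Suc K-1-l)) mod N, 0))"
    proof (rule prod.cong)
      fix l assume l: "l \<in> {m..<K}"
      hence "Suc (K - 1 - l) = K - l" "Suc (K - l) = Suc K - l" by auto
      thus "QQ l (e div N^(K-l) + 1) $$ ((e div N^(K-1-l)) mod N, 0) =
            QQ l (c div N^(Suc K-l) + 1) $$ ((c div N^(Suc K-1-l)) mod N, 0)"
        unfolding e_def div_pow_Suc by simp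
    qed simp
    have "(\<Sum>t<N^K. (if c div N = t then QQ K (t+1) $$ (c mod N, 0) else 0) *
          (if t div N^(K-m) = y then (\<Prod>l\<in>{m..<K}. QQ l (t div N^(K-l) + 1) $$ ((t div N^(K-1-l)) mod N, 0)) else 0))
       = (\<Sum>t<N^K. if t = e then QQ K (e+1) $$ (c mod N, 0) *
          (if e div N^(K-m) = y then (\<Prod>l\<in>{m..<K}. QQ l (e div N^(K-l) + 1) $$ ((e div N^(K-1-l)) mod N, 0)) else 0) else 0)"
      by (rule sum.cong) (auto simp: e_def)
    also have "\<dots> = (if c div N^(Suc K-m) = y then
        (\<Prod>l\<in>{m..<Suc K}. QQ l (c div N^(Suc K-l) + 1) $$ ((c div N^(Suc K-1-l)) mod N, 0)) else 0)"
      using e d1 pr step.hyps by (simp add: sum.delta prod.atLeastLessThan_Suc e_def mult.commute)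
    finally show "(case (c, y) of (i, j) \<Rightarrow> \<Sum>t<N^K. (case (i, t) of (r, c) \<Rightarrow> if r div N = c then QQ K (c+1) $$ (r mod N, 0) else 0) *
       (case (t, j) of (c, y) \<Rightarrow> if c div N^(K-m) = y then
        (\<Prod>l\<in>{m..<K}. QQ l (c div N^(K-l) + 1) $$ ((c div N^(K-1-l)) mod N, 0)) else 0)) =
      (case (c, y) of (c,y) \<Rightarrow> if c div N^(Suc K-m) = y then
        (\<Prod>l\<in>{m..<Suc K}. QQ l (c div N^(Suc K-l) + 1) $$ ((c div N^(Suc K-1-l)) mod N, 0)) else 0)"
      by (simp add: eq_commute[of "c div N"])
  qed
  finally show ?case .
qed
lemma lt_mult_bound: "(u::nat) < A \<Longrightarrow> t < D \<Longrightarrow> u * D + t < A * D"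
proof -
  assume "u < A" "t < D"
  hence "u * D + t < (u+1) * D" by simp
  also have "\<dots> \<le> A * D" using \<open>u < A\<close> by (intro mult_right_mono) auto
  finally show ?thesis .
qed

lemma sum_split: fixes g :: "nat \<Rightarrow> 'a::comm_monoid_add"
  shows "(\<Sum>c<A*D. g c) = (\<Sum>u<A. \<Sum>t<D. g (u*D+t))"
proof -
  have "(\<Sum>c<A*D. g c) = (\<Sum>p\<in>{..<A}\<times>{..<D}. g (fst p * D + snd p))"
  proof (rule sum.reindex_bij_witness[where i="\<lambda>p. fst p * D + snd p" and j="\<lambda>c. (c div D, c mod D)"])
    fix c assume c: "c \<in> {..<A*D}"
    hence D: "D > 0" by (cases D) auto
    show "(c div D, c mod D) \<in> {..<A}\<times>{..<D}" using c D by (auto simp: less_mult_imp_div_less)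
  next
    fix p :: "nat \<times> nat" assume "p \<in> {..<A}\<times>{..<D}"
    thus "fst p * D + snd p \<in> {..<A*D}" by (auto simp: lt_mult_bound)
  qed auto
  also have "\<dots> = (\<Sum>u<A. \<Sum>t<D. g (u*D+t))" by (simp add: sum.cartesian_product split_def)
  finally show ?thesis .
qed

definition Ppath :: "nat \<Rightarrow> nat \<Rightarrow> (nat \<Rightarrow> nat \<Rightarrow> real mat) \<Rightarrow> nat \<Rightarrow> nat \<Rightarrow> real" where
  "Ppath N k QQ n c = (\<Prod>l\<in>{n..k}. QQ l (c div N^(k+1-l) + 1) $$ ((c div N^(k-l)) mod N, 0))"

definition Gs :: "nat \<Rightarrow> nat \<Rightarrow> (nat \<Rightarrow> nat \<Rightarrow> real mat) \<Rightarrow> nat \<Rightarrow> nat \<Rightarrow> nat \<Rightarrow> real" where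
  "Gs N k QQ n p a = (\<Sum>t<N^(k+1-n). if (p*N^(k+1-n)+t) mod N = a then Ppath N k QQ n (p*N^(k+1-n)+t) else 0)"

lemma G_split:
  assumes N: "N \<ge> 1" and n: "n \<le> k"
  shows "Gs N k QQ n p a = (\<Sum>b<N. Gs N k QQ (Suc n) (p*N+b) a * QQ n (p+1) $$ (b,0))"
proof -
  define M where "M = N^(k-n)"
  have D: "N^(k+1-n) = N * M" unfolding M_def using n by (simp add: Suc_diff_le)
  have k1: "k + 1 - Suc n = k - n" by simp
  have "Gs N k QQ n p a = (\<Sum>u<N. \<Sum>t<M. if (p*(N*M)+(u*M+t)) mod N = a then Ppath N k QQ n (p*(N*M)+(u*M+t)) else 0)"
    unfolding Gs_def D by (rule sum_split)
  also have "\<dots> = (\<Sum>u<N. \<Sum>t<M. (if ((p*N+u)*M+t) mod N = a then Ppath N k QQ (Suc n) ((p*N+u)*M+t) else 0) * QQ n (p+1) $$ (u,0))"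
  proof (intro sum.cong refl)
    fix u t assume u: "u \<in> {..<N}" and t: "t \<in> {..<M}"
    have c: "p*(N*M)+(u*M+t) = (p*N+u)*M+t" by (simp add: algebra_simps)
    have M0: "M > 0" using N unfolding M_def by simp
    have d1: "((p*N+u)*M+t) div M = p*N+u" using t M0 by simp
    have d3: "((p*N+u)*M+t) div (N*M) = ((p*N+u)*M+t) div M div N" by (metis div_mult2_eq mult.commute)
    have d2: "((p*N+u)*M+t) div (N*M) = p" unfolding d3 d1 using u by simp
    have "Ppath N k QQ n ((p*N+u)*M+t) = QQ n (p+1) $$ (u,0) * Ppath N k QQ (Suc n) ((p*N+u)*M+t)"
      unfolding Ppath_def using n d1 d2 u D
      by (simp add: prod.atLeast_Suc_atMost M_def)
    thus "(if (p*(N*M)+(u*M+t)) mod N = a then Ppath N k QQ n (p*(N*M)+(u*M+t)) else 0) =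
      (if ((p*N+u)*M+t) mod N = a then Ppath N k QQ (Suc n) ((p*N+u)*M+t) else 0) * QQ n (p+1) $$ (u,0)"
      unfolding c by simp
  qed
  also have "\<dots> = (\<Sum>b<N. Gs N k QQ (Suc n) (p*N+b) a * QQ n (p+1) $$ (b,0))"
    unfolding Gs_def k1 M_def by (simp add: sum_distrib_right)
  finally show ?thesis .
qed
lemma Qbar_aux_carrier: "Qbar_aux N k QQ d i \<in> carrier_mat N N"
  by (cases d) auto

lemma Qbar_G:
  assumes N: "N \<ge> 1" and m1: "1 \<le> m"
   and Q: "\<And>l j. m \<le> l \<Longrightarrow> l \<le> k \<Longrightarrow> 1 \<le> j \<Longrightarrow> j \<le> N^l \<Longrightarrow> QQ l j \<in> carrier_mat N 1"
  shows "d \<le> k+1-m \<Longrightarrow> i < N^(k-d) \<Longrightarrow> a < N \<Longrightarrow> b < N \<Longrightarrow>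
    Qbar_aux N k QQ d (i+1) $$ (a,b) = Gs N k QQ (k+1-d) (i*N+b) a"
proof (induction d arbitrary: i a b)
  case 0
  thus ?case by (simp add: Gs_def Ppath_def)
next
  case (Suc d)
  have dk: "d < k" "m \<le> k - d" using Suc.prems m1 by auto
  have pw: "N^(k-d) = N^(k - Suc d) * N" using dk by (metis Suc_diff_Suc power_Suc2)
  have idx: "i*N+b < N^(k-d)" unfolding pw using Suc.prems by (intro lt_mult_bound) auto
  have Qc: "QQ (k-d) (N*i+b+1) \<in> carrier_mat N 1"
    using Q[of "k-d" "N*i+b+1"] dk idx by (auto simp: mult.commute)
  have "Qbar_aux N k QQ (Suc d) (i+1) $$ (a,b) = (Qbar_aux N k QQ d (N*i+b+1) * QQ (k-d) (N*i+b+1)) $$ (a,0)"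
    using Suc.prems by simp
  also have "\<dots> = (\<Sum>b'<N. Qbar_aux N k QQ d (N*i+b+1) $$ (a,b') * QQ (k-d) (N*i+b+1) $$ (b',0))"
    using Qc Qbar_aux_carrier[of N k QQ d "N*i+b+1"] Suc.prems
    by (auto simp: scalar_prod_def atLeast0LessThan)
  also have "\<dots> = (\<Sum>b'<N. Gs N k QQ (k+1-d) ((i*N+b)*N+b') a * QQ (k-d) (i*N+b+1) $$ (b',0))"
  proof (rule sum.cong[OF refl])
    fix b' assume b': "b' \<in> {..<N}"
    have "Qbar_aux N k QQ d ((i*N+b)+1) $$ (a,b') = Gs N k QQ (k+1-d) ((i*N+b)*N+b') a"
      using Suc.IH[of "i*N+b" a b'] Suc.prems idx b' by auto
    thus "Qbar_aux N k QQ d (N*i+b+1) $$ (a,b') * QQ (k-d) (N*i+b+1) $$ (b',0) =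
        Gs N k QQ (k+1-d) ((i*N+b)*N+b') a * QQ (k-d) (i*N+b+1) $$ (b',0)"
      by (simp add: mult.commute)
  qed
  also have "\<dots> = Gs N k QQ (k-d) (i*N+b) a"
    using G_split[of N "k-d" k QQ "i*N+b" a] N dk by (simp add: Suc_diff_le)
  finally show ?case by simp
qed
lemma Cmat_eq: assumes N: "N \<ge> 1" and n: "n \<ge> 1"
  shows "Cmat N n 1 = mat (N^n) (N^n) (\<lambda>(r,c). if r div N^(n-1) = c mod N \<and> c div N = r mod N^(n-1) then 1 else 0)"
proof -
  have e: "N * N^(n-1) = N^n" "N^(n-1) * N = N^n" using n
    by (metis Suc_diff_le diff_Suc_1 power_Suc, metis Suc_diff_le diff_Suc_1 power_Suc2)
  show ?thesis unfolding Cmat_def using commat_eq[of N "N^(n-1)"] N e by simp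
qed

lemma Dmat_eq: assumes N: "N \<ge> 1" and m: "m \<ge> 1"
  shows "msum (N^m) (N^m) (\<lambda>i. Eii (N^(m-1)) i \<otimes>\<^sub>K Qbar N k QQ m i) {1..N^(m-1)}
    = mat (N^m) (N^m) (\<lambda>(r,c). if r div N = c div N then Qbar N k QQ m (r div N + 1) $$ (r mod N, c mod N) else 0)"
proof -
  have e: "N^m = N^(m-1) * N" using m by (metis Suc_diff_le diff_Suc_1 power_Suc2)
  show ?thesis unfolding msum_def
  proof (rule mat_eq_on)
    fix r c assume r: "r < N^m" and c: "c < N^m"
    have rd: "r div N < N^(m-1)" "c div N < N^(m-1)" using r c e by (auto simp: less_mult_imp_div_less)
    have Qc: "Qbar N k QQ m i \<in> carrier_mat N N" for i unfolding Qbar_def by (rule Qbar_aux_carrier)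
    have ent: "(Eii (N^(m-1)) i \<otimes>\<^sub>K Qbar N k QQ m i) $$ (r,c) =
      (if i = r div N + 1 then (if r div N = c div N then Qbar N k QQ m (r div N + 1) $$ (r mod N, c mod N) else 0) else 0)"
      if i: "i \<in> {1..N^(m-1)}" for i
    proof -
      have "r < N^(m-1) * N" "c < N^(m-1) * N" using r c e by auto
      thus ?thesis using rd Qc[of i] i N
        by (auto simp: kron_index Eii_mat)
    qed
    have "(\<Sum>i\<in>{1..N^(m-1)}. (Eii (N^(m-1)) i \<otimes>\<^sub>K Qbar N k QQ m i) $$ (r,c)) =
      (\<Sum>i\<in>{1..N^(m-1)}. (if i = r div N + 1 then (if r div N = c div N then Qbar N k QQ m (r div N + 1) $$ (r mod N, c mod N) else 0) else 0))"
      by (rule sum.cong[OF refl]) (rule ent)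
    also have "\<dots> = (if r div N = c div N then Qbar N k QQ m (r div N + 1) $$ (r mod N, c mod N) else 0)"
      using rd by (simp add: sum.delta)
    finally show "(case (r, c) of (a, b) \<Rightarrow> \<Sum>x\<in>{1..N ^ (m - 1)}. (Eii (N ^ (m - 1)) x \<otimes>\<^sub>K Qbar N k QQ m x) $$ (a, b)) =
         (case (r, c) of (r, c) \<Rightarrow> if r div N = c div N then Qbar N k QQ m (r div N + 1) $$ (r mod N, c mod N) else 0)"
      by (simp only: prod.case)
  qed
qed
theorem lemma1:
  fixes N k m :: nat and QQ :: "nat \<Rightarrow> nat \<Rightarrow> real mat"
  assumes "N \<ge> 1" and "k \<ge> 1" and "1 \<le> m" and "m \<le> k"
    and "\<And>n l. m \<le> n \<Longrightarrow> n \<le> k \<Longrightarrow> 1 \<le> l \<Longrightarrow> l \<le> N^n \<Longrightarrow> prob_vec N (QQ n l)"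
  shows "shift_mat N m k QQ =
    Cmat N m 1 * msum (N^m) (N^m) (\<lambda>i. Eii (N^(m-1)) i \<otimes>\<^sub>K Qbar N k QQ m i) {1..N^(m-1)}"
proof -
  have N: "N \<ge> 1" using assms(1) .
  have m1: "m \<ge> 1" using assms(3) .
  have mk: "m \<le> k" using assms(4) .
  have Q: "\<And>l j. m \<le> l \<Longrightarrow> l \<le> k \<Longrightarrow> 1 \<le> j \<Longrightarrow> j \<le> N^l \<Longrightarrow> QQ l j \<in> carrier_mat N 1"
    using assms(5) by (simp add: prob_vec_def)
  define D where "D = N^(k+1-m)"
  define E where "E = N^(m-1)"
  have hD: "N^(k+1) = N^m * D" unfolding D_def using mk by (simp flip: power_add)
  have hE: "N^m = E * N" unfolding E_def using m1 by (metis Suc_diff_le diff_Suc_1 power_Suc2)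
  have hk: "N^k = E * D" unfolding E_def D_def using m1 mk by (simp flip: power_add)
  have hDN: "D = N * N^(k-m)" unfolding D_def using mk by (simp add: Suc_diff_le)
  have D0: "D > 0" and E0: "E > 0" using N unfolding D_def E_def by auto
  have L: "foldr (\<lambda>A acc. A * acc) (map (\<lambda>n. Mmat N n n) [m..<k+1]) (1\<^sub>m (N^(k+1)))
      = mat (N^m) (N^(k+1)) (\<lambda>(r,c). if r = c div D then 1 else 0)"
    using Mprod[OF N, of m "k+1"] mk unfolding D_def by simp
  have C: "Cmat N (k+1) 1 = mat (N^(k+1)) (N^(k+1)) (\<lambda>(r,c). if r div N^k = c mod N \<and> c div N = r mod N^k then 1 else 0)"
    using Cmat_eq[OF N, of "k+1"] by simp
  have prodP: "(\<Prod>l\<in>{m..<k+1}. QQ l (c div N^(k+1-l) + 1) $$ ((c div N^(k+1-1-l)) mod N, 0)) = Ppath N k QQ m c" for c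
    unfolding Ppath_def by (simp add: atLeastLessThanSuc_atLeastAtMost)
  have R: "foldr (\<lambda>A acc. A * acc) (map (\<lambda>n. Bmat N n n (QQ n)) (rev [m..<k+1])) (1\<^sub>m (N^m))
      = mat (N^(k+1)) (N^m) (\<lambda>(c,y). if c div D = y then Ppath N k QQ m c else 0)"
  proof -
    have mk1: "m \<le> k+1" using mk by simp
    have Q': "\<And>l j. m \<le> l \<Longrightarrow> l < k+1 \<Longrightarrow> 1 \<le> j \<Longrightarrow> j \<le> N^l \<Longrightarrow> QQ l j \<in> carrier_mat N 1"
      using Q by simp
    show ?thesis by (subst Bprod[OF N mk1 Q'], assumption+, unfold prodP D_def, rule refl)
  qed
  have Cm: "Cmat N m 1 = mat (N^m) (N^m) (\<lambda>(r,c). if r div E = c mod N \<and> c div N = r mod E then 1 else 0)"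
    unfolding E_def by (rule Cmat_eq[OF N m1])
  show ?thesis
    unfolding shift_mat_def L C R Cm Dmat_eq[OF N m1] mat_mult_mat
  proof (rule mat_eq_on, simp only: prod.case)
    fix x y assume x: "x < N^m" and y: "y < N^m"
    show "(\<Sum>c<N^(k+1). (\<Sum>r<N^(k+1). (if x = r div D then 1 else 0) * (if r div N^k = c mod N \<and> c div N = r mod N^k then 1 else 0)) *
           (if c div D = y then Ppath N k QQ m c else 0)) =
         (\<Sum>r<N^m. (if x div E = r mod N \<and> r div N = x mod E then 1 else 0) *
           (if r div N = y div N then Qbar N k QQ m (r div N + 1) $$ (r mod N, y mod N) else 0))"
    proof -
      define M where "M = N^(k-m)"
      have DM: "D = M * N" unfolding M_def using hDN by simp
      have M0: "M > 0" unfolding M_def using N by simp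
      have N0: "N > 0" using N by simp
      have Nk0: "N^k > 0" using N by simp
      have NS: "N^(k+1) = N * N^k" by simp
      have yE: "y div N < E" using y hE by (simp add: less_mult_imp_div_less)
      have xE: "x div E < N" using x hE by (simp add: div_lt_aux)
      have inner: "(\<Sum>r<N^(k+1). (if x = r div D then 1 else 0) * (if r div N^k = c mod N \<and> c div N = r mod N^k then 1 else 0))
          = (if x = ((c mod N)*N^k + c div N) div D then 1 else (0::real))" if c: "c < N^(k+1)" for c
      proof -
        define s where "s = (c mod N)*N^k + c div N"
        have cdN: "c div N < N^k" using c NS by (simp add: div_lt_aux)
        have s_lt: "s < N^(k+1)" unfolding s_def NS using cdN N0
          by (metis lt_mult_bound mod_less_divisor)
        have iff: "(r div N^k = c mod N \<and> c div N = r mod N^k) \<longleftrightarrow> r = s" for r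
        proof
          assume "r div N^k = c mod N \<and> c div N = r mod N^k"
          thus "r = s" unfolding s_def by (metis div_mult_mod_eq)
        next
          assume "r = s"
          thus "r div N^k = c mod N \<and> c div N = r mod N^k" unfolding s_def using cdN Nk0 by simp
        qed
        have "(\<Sum>r<N^(k+1). (if x = r div D then 1 else 0) * (if r div N^k = c mod N \<and> c div N = r mod N^k then 1 else 0))
            = (\<Sum>r<N^(k+1). if r = s then (if x = s div D then 1 else 0) else (0::real))"
          by (rule sum.cong[OF refl]) (auto simp: iff)
        also have "\<dots> = (if x = s div D then 1 else 0)" using s_lt by (simp add: sum.delta)
        finally show ?thesis unfolding s_def .
      qed
      have sig: "((((y*D+t) mod N)*N^k + (y*D+t) div N) div D) = (t mod N)*E + y div N" if t: "t < D" for t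
      proof -
        have tN: "t div N < M" using t DM by (simp add: div_lt_aux mult.commute)
        have yD: "y*D+t = t + (y*M)*N" using DM by (simp add: algebra_simps)
        have m1': "(y*D+t) mod N = t mod N" unfolding yD by simp
        have d1': "(y*D+t) div N = y*M + t div N" unfolding yD using N0 by simp
        have eq: "((t mod N)*N^k + (y*M + t div N)) = (y*M + t div N) + ((t mod N)*E)*D"
          using hk by (simp add: algebra_simps)
        have "((t mod N)*N^k + (y*M + t div N)) div D = ((y*M + t div N) + ((t mod N)*E)*D) div D"
          by (simp only: eq)
        also have "\<dots> = (y*M + t div N) div D + (t mod N)*E"
          using D0 by (simp only: div_mult_self1 neq0_conv add.commute)
        finally have "((t mod N)*N^k + (y*M + t div N)) div D = (y*M + t div N) div D + (t mod N)*E" .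
        also have "(y*M + t div N) div D = (y*M + t div N) div M div N"
          unfolding DM by (simp add: div_mult2_eq)
        also have "(y*M + t div N) div M = y" using tN M0 by simp
        finally show ?thesis unfolding m1' d1' by simp
      qed
      have lhs: "(\<Sum>c<N^(k+1). (\<Sum>r<N^(k+1). (if x = r div D then 1 else 0) * (if r div N^k = c mod N \<and> c div N = r mod N^k then 1 else 0)) *
           (if c div D = y then Ppath N k QQ m c else 0))
         = (\<Sum>t<D. if x = (t mod N)*E + y div N then Ppath N k QQ m (y*D+t) else 0)"
      proof -
        have "(\<Sum>c<N^(k+1). (\<Sum>r<N^(k+1). (if x = r div D then 1 else 0) * (if r div N^k = c mod N \<and> c div N = r mod N^k then 1 else 0)) *
           (if c div D = y then Ppath N k QQ m c else 0))
          = (\<Sum>c<N^m*D. (if x = ((c mod N)*N^k + c div N) div D then 1 else 0) * (if c div D = y then Ppath N k QQ m c else 0))"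
          unfolding hD[symmetric] by (rule sum.cong[OF refl], subst inner, simp_all)
        also have "\<dots> = (\<Sum>u<N^m. \<Sum>t<D. (if x = (((u*D+t) mod N)*N^k + (u*D+t) div N) div D then 1 else 0) * (if (u*D+t) div D = u then Ppath N k QQ m (u*D+t) else 0) * (if u = y then 1 else 0))"
        proof -
          have "(\<Sum>c<N^m*D. (if x = ((c mod N)*N^k + c div N) div D then 1 else 0) * (if c div D = y then Ppath N k QQ m c else 0))
            = (\<Sum>u<N^m. \<Sum>t<D. (if x = (((u*D+t) mod N)*N^k + (u*D+t) div N) div D then 1 else 0) * (if (u*D+t) div D = y then Ppath N k QQ m (u*D+t) else 0))"
            by (rule sum_split)
          also have "\<dots> = (\<Sum>u<N^m. \<Sum>t<D. (if x = (((u*D+t) mod N)*N^k + (u*D+t) div N) div D then 1 else 0) * (if (u*D+t) div D = u then Ppath N k QQ m (u*D+t) else 0) * (if u = y then 1 else 0))"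
          proof (intro sum.cong refl)
            fix u t assume "t \<in> {..<D}"
            hence "(u*D+t) div D = u" using D0 by simp
            thus "(if x = (((u*D+t) mod N)*N^k + (u*D+t) div N) div D then 1 else 0) * (if (u*D+t) div D = y then Ppath N k QQ m (u*D+t) else 0) =
              (if x = (((u*D+t) mod N)*N^k + (u*D+t) div N) div D then 1 else 0) * (if (u*D+t) div D = u then Ppath N k QQ m (u*D+t) else 0) * (if u = y then 1 else (0::real))"
              by auto
          qed
          finally show ?thesis .
        qed
        also have "\<dots> = (\<Sum>u<N^m. if u = y then (\<Sum>t<D. (if x = (((y*D+t) mod N)*N^k + (y*D+t) div N) div D then 1 else 0) * Ppath N k QQ m (y*D+t)) else 0)"
          by (rule sum.cong[OF refl]) (use D0 in auto)
        also have "\<dots> = (\<Sum>t<D. (if x = (((y*D+t) mod N)*N^k + (y*D+t) div N) div D then 1 else 0) * Ppath N k QQ m (y*D+t))"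
          using y by (simp add: sum.delta)
        also have "\<dots> = (\<Sum>t<D. if x = (t mod N)*E + y div N then Ppath N k QQ m (y*D+t) else 0)"
          by (rule sum.cong[OF refl]) (simp add: sig)
        finally show ?thesis .
      qed
      have rhs: "(\<Sum>r<N^m. (if x div E = r mod N \<and> r div N = x mod E then 1 else 0) *
           (if r div N = y div N then Qbar N k QQ m (r div N + 1) $$ (r mod N, y mod N) else 0))
         = (if x mod E = y div N then Qbar N k QQ m (x mod E + 1) $$ (x div E, y mod N) else 0)"
      proof -
        define r0 where "r0 = (x mod E)*N + x div E"
        have r0: "r0 < N^m" unfolding r0_def hE using xE E0 by (intro lt_mult_bound) auto
        have iff: "(x div E = r mod N \<and> r div N = x mod E) \<longleftrightarrow> r = r0" for r
        proof
          assume "x div E = r mod N \<and> r div N = x mod E"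
          thus "r = r0" unfolding r0_def by (metis div_mult_mod_eq)
        next
          assume "r = r0"
          thus "x div E = r mod N \<and> r div N = x mod E" unfolding r0_def using xE N0 by simp
        qed
        have r0d: "r0 div N = x mod E" "r0 mod N = x div E" unfolding r0_def using xE N0 by simp_all
        have "(\<Sum>r<N^m. (if x div E = r mod N \<and> r div N = x mod E then 1 else 0) *
           (if r div N = y div N then Qbar N k QQ m (r div N + 1) $$ (r mod N, y mod N) else 0))
          = (\<Sum>r<N^m. if r = r0 then (if r0 div N = y div N then Qbar N k QQ m (r0 div N + 1) $$ (r0 mod N, y mod N) else 0) else 0)"
          by (rule sum.cong[OF refl]) (auto simp: iff)
        also have "\<dots> = (if x mod E = y div N then Qbar N k QQ m (x mod E + 1) $$ (x div E, y mod N) else 0)"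
          using r0 r0d by (simp add: sum.delta)
        finally show ?thesis .
      qed
      have qb: "Qbar N k QQ m (x mod E + 1) $$ (x div E, y mod N) = Gs N k QQ m y (x div E)" if xy: "x mod E = y div N"
      proof -
        have "Qbar N k QQ m (x mod E + 1) $$ (x div E, y mod N) = Gs N k QQ (k+1-(k+1-m)) ((x mod E)*N + y mod N) (x div E)"
          unfolding Qbar_def
          by (rule Qbar_G[OF N m1 Q]) (use mk E0 xE N0 in \<open>auto simp: E_def\<close>)
        also have "(x mod E)*N + y mod N = y" unfolding xy by simp
        finally show ?thesis using mk by simp
      qed
      have fin: "(\<Sum>t<D. if x = (t mod N)*E + y div N then Ppath N k QQ m (y*D+t) else 0) =
        (if x mod E = y div N then Gs N k QQ m y (x div E) else 0)"
      proof -
        have "(if x mod E = y div N then Gs N k QQ m y (x div E) else 0) =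
          (\<Sum>t<D. if x mod E = y div N then (if (y*D+t) mod N = x div E then Ppath N k QQ m (y*D+t) else 0) else 0)"
          unfolding Gs_def D_def by simp
        also have "\<dots> = (\<Sum>t<D. if x = (t mod N)*E + y div N then Ppath N k QQ m (y*D+t) else 0)"
        proof (rule sum.cong[OF refl])
          fix t assume "t \<in> {..<D}"
          have yD: "y*D+t = t + (y*M)*N" using DM by (simp add: algebra_simps)
          have m1': "(y*D+t) mod N = t mod N" unfolding yD by simp
          have tN: "t mod N < N" using N0 by simp
          have "x = (t mod N)*E + y div N \<longleftrightarrow> (x mod E = y div N \<and> t mod N = x div E)"
          proof
            assume "x = (t mod N)*E + y div N"
            thus "x mod E = y div N \<and> t mod N = x div E" using yE E0 by simp
          next
            assume "x mod E = y div N \<and> t mod N = x div E"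
            thus "x = (t mod N)*E + y div N" by (metis div_mult_mod_eq)
          qed
          thus "(if x mod E = y div N then (if (y*D+t) mod N = x div E then Ppath N k QQ m (y*D+t) else 0) else 0) =
            (if x = (t mod N)*E + y div N then Ppath N k QQ m (y*D+t) else 0)"
            unfolding m1' by auto
        qed
        finally show ?thesis by simp
      qed
      show ?thesis unfolding lhs rhs fin using qb by simp
    qed
  qed
qed
end
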